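(* Fix $n\ge1$, $\tau>0$, $\beta\in(0,1)$, and use the notation of the context. For every $x\in\mathbb{R}^n$ with $|x|\le\beta R$, the total mass $\mu(x)=\int_{R-s}^{R+s}h(x,r)\,dr$ satisfies \[ \mu(x)=\big(1+O(N^{-1})\big)\frac{\beta^{N-3}}{\sqrt{\pi\tau}}\int_0^s\sigma^2\Big(1-\frac{\sigma^2+|x|^2}{2N\beta^2\tau}\Big)^{\frac{N-3}{2}}d\sigma, \] where $O(N^{-1})$ denotes a quantity bounded by a constant (possibly depending on $\beta,\tau$) times $N^{-1}$, the constant being independent of $N$ and $x$.
   Context: For $N\ge3$: $R=\sqrt{2N\tau}$, $\bar y\in\mathbb{R}^N$ with $|\bar y|=R$; for $|x|\le\beta R$, $s=s(x)=\sqrt{\beta^2R^2-|x|^2}$. $\gamma(\theta)=\gamma(N,\theta)$ is the fraction of the volume of $S^{N-1}$ contained in a geodesic ball of radius $\theta\in[0,\pi]$. For $r\in[R-s,R+s]$, the part of the sphere $\{|y|=r\}\subset\mathbb{R}^N$ inside $B_s(\bar y)$ is a spherical cap centered at $r\bar y/R$; $\theta(x,r)$ is its angular radius. $h(x,r)=r\,\gamma(\theta(x,r))$. *)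

theory Defs
  imports "HOL-Analysis.Analysis"
begin

text \<open>Fraction of the (surface) volume of the unit sphere S^(N-1) in R^N contained in a
  geodesic ball of radius theta, 0 <= theta <= pi, given by the standard formula
  (surface element sin(phi)^(N-2) in the polar angle phi).\<close>
definition cap_fraction :: "nat \<Rightarrow> real \<Rightarrow> real" where
  "cap_fraction N \<theta> =
     integral {0..\<theta>} (\<lambda>\<phi>. sin \<phi> ^ (N - 2)) / integral {0..pi} (\<lambda>\<phi>. sin \<phi> ^ (N - 2))"

definition radR :: "nat \<Rightarrow> real \<Rightarrow> real" where
  "radR N \<tau> = sqrt (2 * real N * \<tau>)"

definition sfun :: "nat \<Rightarrow> real \<Rightarrow> real \<Rightarrow> real \<Rightarrow> real" where
  "sfun N \<tau> \<beta> t = sqrt (\<beta>\<^sup>2 * (radR N \<tau>)\<^sup>2 - t\<^sup>2)"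

text \<open>Angular radius of the spherical cap {|y| = r} \<inter> B_s(ybar), |ybar| = R, centred at
  r ybar / R: a point y with |y| = r at angle phi from ybar satisfies
  |y - ybar|^2 = r^2 + R^2 - 2 r R cos phi, which is < s^2 iff
  cos phi > (r^2 + R^2 - s^2)/(2 r R).\<close>
definition cap_angle :: "real \<Rightarrow> real \<Rightarrow> real \<Rightarrow> real" where
  "cap_angle R s r = arccos ((r\<^sup>2 + R\<^sup>2 - s\<^sup>2) / (2 * r * R))"

definition hfun :: "nat \<Rightarrow> real \<Rightarrow> real \<Rightarrow> 'a::real_normed_vector \<Rightarrow> real \<Rightarrow> real" where
  "hfun N \<tau> \<beta> x r =
     r * cap_fraction N (cap_angle (radR N \<tau>) (sfun N \<tau> \<beta> (norm x)) r)"

definition mu :: "nat \<Rightarrow> real \<Rightarrow> real \<Rightarrow> 'a::real_normed_vector \<Rightarrow> real" where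
  "mu N \<tau> \<beta> x =
     (let R = radR N \<tau>; s = sfun N \<tau> \<beta> (norm x)
      in integral {R - s..R + s} (hfun N \<tau> \<beta> x))"

end

theory Submission
  imports Defs
begin


definition WW :: "nat \<Rightarrow> real" where "WW m = integral {0..pi} (\<lambda>x. sin x ^ m)"

lemma WW_rec: "real (m+2) * WW (m+2) = real (m+1) * WW m"
proof -
  define F where "F x = - (sin x ^ (m+1) * cos x)" for x :: real
  have d: "(F has_vector_derivative (real (m+2) * sin x ^ (m+2) - real (m+1) * sin x ^ m)) (at x within {0..pi})" for x
  proof -
    have "(F has_real_derivative (- (real (m+1) * sin x ^ m * cos x * cos x + sin x ^ (m+1) * (- sin x)))) (at x within {0..pi})"
      unfolding F_def apply (rule derivative_eq_intros refl)+ by (cases m) (simp_all add: algebra_simps)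
    moreover have "- (real (m+1) * sin x ^ m * cos x * cos x + sin x ^ (m+1) * (- sin x)) = real (m+2) * sin x ^ (m+2) - real (m+1) * sin x ^ m"
    proof -
      have cc: "cos x * cos x = 1 - sin x * sin x" using sin_cos_squared_add[of x] by (simp add: power2_eq_square)
      have c: "cos x * (cos x * y) = y - sin x * (sin x * y)" for y
        by (subst mult.assoc[symmetric], subst cc) (simp add: algebra_simps)
      show ?thesis by (simp add: algebra_simps power_add c)
    qed
    ultimately show ?thesis by (simp add: has_real_derivative_iff_has_vector_derivative)
  qed
  have "((\<lambda>x. real (m+2) * sin x ^ (m+2) - real (m+1) * sin x ^ m) has_integral (F pi - F 0)) {0..pi}"
    by (rule fundamental_theorem_of_calculus) (use d in auto)
  hence h: "((\<lambda>x. real (m+2) * sin x ^ (m+2) - real (m+1) * sin x ^ m) has_integral 0) {0..pi}"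
    by (simp add: F_def)
  have i1: "((\<lambda>x. real (m+2) * sin x ^ (m+2)) has_integral (real (m+2) * WW (m+2))) {0..pi}"
    unfolding WW_def by (intro has_integral_mult_right integrable_integral integrable_continuous_real continuous_intros)
  have i2: "((\<lambda>x. real (m+1) * sin x ^ m) has_integral (real (m+1) * WW m)) {0..pi}"
    unfolding WW_def by (intro has_integral_mult_right integrable_integral integrable_continuous_real continuous_intros)
  from has_integral_diff[OF i1 i2] h have "real (m+2) * WW (m+2) - real (m+1) * WW m = 0"
    using has_integral_unique by blast
  thus ?thesis by simp
qed

lemma WW0: "WW 0 = pi" unfolding WW_def by simp

lemma WW1: "WW 1 = 2"
proof -
  have "((\<lambda>x. sin x) has_integral ((- cos pi) - (- cos 0))) {0..pi}"
    by (rule fundamental_theorem_of_calculus) (auto intro!: derivative_eq_intros simp: has_real_derivative_iff_has_vector_derivative[symmetric])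
  hence "integral {0..pi} (\<lambda>x. sin x) = 2" using integral_unique by simp
  moreover have "WW 1 = integral {0..pi} (\<lambda>x. sin x)" unfolding WW_def by simp
  ultimately show ?thesis by linarith
qed

lemma WW_prod: "WW m * WW (m+1) = 2 * pi / real (m+1)"
proof (induction m)
  case 0 show ?case using WW1 by (simp add: WW0)
next
  case (Suc m)
  have "WW (m+2) = real (m+1) / real (m+2) * WW m" using WW_rec[of m]
    by (simp add: field_simps)
  hence "WW (Suc m) * WW (Suc m + 1) = real (m+1) / real (m+2) * (WW m * WW (m+1))"
    by simp
  also have "\<dots> = 2 * pi / real (Suc m + 1)" using Suc by (simp add: field_simps)
  finally show ?case .
qed

lemma WW_nonneg: "WW m \<ge> 0"
  unfolding WW_def by (intro integral_nonneg integrable_continuous_real continuous_intros) (auto intro!: zero_le_power sin_ge_zero)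

lemma WW_pos: "WW m > 0"
  using WW_prod[of m] WW_nonneg[of m] WW_nonneg[of "m+1"] 
  by (metis divide_pos_pos le_less mult_eq_0_iff not_less mult_pos_pos of_nat_0_less_iff pi_gt_zero zero_less_Suc zero_less_numeral add.commute plus_1_eq_Suc)

lemma WW_mono: "WW (m+1) \<le> WW m"
  unfolding WW_def
proof (rule integral_le)
  show "(\<lambda>x. sin x ^ (m+1)) integrable_on {0..pi}" "(\<lambda>x. sin x ^ m) integrable_on {0..pi}"
    by (intro integrable_continuous_real continuous_intros)+
  fix x assume "x \<in> {0..pi}"
  hence "0 \<le> sin x" "sin x \<le> 1" by (auto intro: sin_ge_zero)
  thus "sin x ^ (m+1) \<le> sin x ^ m" by (simp add: mult_left_le_one_le)
qed

lemma WW_sq_bounds: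
  assumes "m \<ge> 1"
  shows "2 * pi / real (m+1) \<le> WW m ^ 2" "WW m ^ 2 \<le> 2 * pi / real m"
proof -
  show "2 * pi / real (m+1) \<le> WW m ^ 2"
    using WW_prod[of m] mult_left_mono[OF WW_mono[of m], of "WW m"] WW_pos[of m] by (simp add: power2_eq_square)
  define k where "k = m - 1"
  have k: "m = k + 1" using assms by (simp add: k_def)
  show "WW m ^ 2 \<le> 2 * pi / real m"
    using WW_prod[of k] mult_right_mono[OF WW_mono[of k], of "WW (k+1)"] WW_pos[of m] unfolding k by (simp add: power2_eq_square)
qed



lemma fubini_step:
  fixes R s :: real and m :: nat
  assumes R: "R > 0" and s0: "0 < s" and sR: "s < R"
  shows "integral {R-s..R+s} (\<lambda>r. r * integral {0..arccos ((r\<^sup>2 + R\<^sup>2 - s\<^sup>2) / (2*r*R))} (\<lambda>\<phi>. sin \<phi> ^ m))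
       = integral {0..arcsin (s/R)} (\<lambda>\<phi>. sin \<phi> ^ m * (2*R*cos \<phi> * sqrt (s\<^sup>2 - R\<^sup>2 * (sin \<phi>)\<^sup>2)))"
proof -
  define c where "c r = (r\<^sup>2 + R\<^sup>2 - s\<^sup>2) / (2*r*R)" for r
  define th where "th r = arccos (c r)" for r
  define G where "G (x::real) = integral {0..x} (\<lambda>\<phi>. sin \<phi> ^ m)" for x
  define Fr where "Fr r = r * G (th r)" for r
  define P where "P r \<phi> \<longleftrightarrow> 0 \<le> \<phi> \<and> \<phi> \<le> pi/2 \<and> r^2 - 2*r*R*cos \<phi> + R^2 - s^2 \<le> 0" for r \<phi>
  define q where "q \<phi> = sqrt (s\<^sup>2 - R\<^sup>2 * (sin \<phi>)\<^sup>2)" for \<phi>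
  define H where "H \<phi> = sin \<phi> ^ m * (2*R*cos \<phi> * q \<phi>)" for \<phi>
  define pm where "pm = arcsin (s/R)"
  define f where "f r \<phi> = ennreal (if P r \<phi> then r * sin \<phi> ^ m else 0)" for r \<phi>
  have sR1: "s/R \<le> 1" "0 \<le> s/R" using R s0 sR by auto
  have pm: "0 \<le> pm" "pm \<le> pi/2" "sin pm = s/R"
    using arcsin_bounded[of "s/R"] sR1 arcsin_le_arcsin[of 0 "s/R"] unfolding pm_def by auto
  have Sint: "(\<lambda>\<phi>. sin \<phi> ^ m) integrable_on {a..b}" for a b :: real
    by (rule integrable_continuous_real) (intro continuous_intros)
  have crange: "0 \<le> c r \<and> c r \<le> 1" if r: "r \<in> {R-s..R+s}" for r
  proof -
    have rpos: "r > 0" using r sR by auto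
    have "(r - R - s) * (r - R + s) \<le> 0" using r by (intro mult_nonpos_nonneg) auto
    hence "r\<^sup>2 + R\<^sup>2 - s\<^sup>2 \<le> 2*r*R" by (simp add: power2_eq_square algebra_simps)
    moreover have "0 \<le> r\<^sup>2 + R\<^sup>2 - s\<^sup>2"
    proof -
      have "s\<^sup>2 < R\<^sup>2" using sR s0 by (intro power_strict_mono) auto
      thus ?thesis using zero_le_power2[of r] by linarith
    qed
    ultimately show ?thesis using rpos R unfolding c_def by (auto simp: divide_le_eq_1)
  qed
  have th_range: "0 \<le> th r \<and> th r \<le> pi/2 \<and> cos (th r) = c r" if r: "r \<in> {R-s..R+s}" for r
    using crange[OF r] arccos_le_pi2[of "c r"] arccos_lbound[of "c r"] unfolding th_def by auto
  have Pr: "P r \<phi> \<longleftrightarrow> \<phi> \<in> {0..th r}" if r: "r \<in> {R-s..R+s}" for r \<phi>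
  proof -
    have rpos: "r > 0" using r sR by auto
    have "r^2 - 2*r*R*cos \<phi> + R^2 - s^2 \<le> 0 \<longleftrightarrow> c r \<le> cos \<phi>"
      unfolding c_def using rpos R by (simp add: divide_le_eq algebra_simps)
    moreover have "0 \<le> \<phi> \<Longrightarrow> \<phi> \<le> pi \<Longrightarrow> (c r \<le> cos \<phi> \<longleftrightarrow> \<phi> \<le> th r)"
      using cos_mono_le_eq[of "th r" \<phi>] th_range[OF r] by auto
    ultimately show ?thesis unfolding P_def using th_range[OF r] by auto
  qed
  have Pnr: "\<not> P r \<phi>" if r: "r \<notin> {R-s..R+s}" for r \<phi>
  proof
    assume p: "P r \<phi>"
    have cs: "0 \<le> cos \<phi>" "cos \<phi> \<le> 1" using p unfolding P_def by (auto intro: cos_ge_zero)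
    have "(r - R)^2 \<le> s^2"
    proof (cases "r \<ge> 0")
      case True
      have "2*r*R*cos \<phi> \<le> 2*r*R" using True R cs by (simp add: mult_left_le)
      thus ?thesis using p unfolding P_def by (simp add: power2_eq_square algebra_simps)
    next
      case False
      have "2*r*R*cos \<phi> \<le> 0" using False R cs by (simp add: mult_nonpos_nonneg)
      moreover have "s^2 < R^2" using s0 sR by (simp add: power_strict_mono)
      ultimately show ?thesis using p unfolding P_def by (smt (verit) zero_le_power2)
    qed
    hence "\<bar>r - R\<bar> \<le> s" using s0 by (simp add: abs_le_square_iff[symmetric])
    thus False using r by auto
  qed
  have key: "r^2 - 2*r*R*cos \<phi> + R^2 - s^2 = (r - R*cos \<phi>)^2 - (s^2 - R^2 * (sin \<phi>)^2)" for r \<phi>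
  proof -
    have e: "cos \<phi> * cos \<phi> = 1 - sin \<phi> * sin \<phi>" using sin_cos_squared_add[of \<phi>] by (simp add: power2_eq_square)
    show ?thesis by (simp add: power2_eq_square algebra_simps e)
  qed
  have Pphi: "P r \<phi> \<longleftrightarrow> (\<phi> \<in> {0..pm} \<and> r \<in> {R*cos \<phi> - q \<phi> .. R*cos \<phi> + q \<phi>})" for r \<phi>
  proof (cases "\<phi> \<in> {0..pm}")
    case True
    hence ph: "0 \<le> \<phi>" "\<phi> \<le> pi/2" using pm by auto
    have "sin \<phi> \<le> s/R" using True pm sin_mono_le_eq[of \<phi> pm] by auto
    moreover have "0 \<le> sin \<phi>" using ph by (intro sin_ge_zero) auto
    ultimately have "R * sin \<phi> \<le> s" using R by (simp add: field_simps)
    hence "(R * sin \<phi>)^2 \<le> s^2" using \<open>0 \<le> sin \<phi>\<close> R by (intro power_mono) auto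
    hence qq: "(q \<phi>)^2 = s^2 - R^2 * (sin \<phi>)^2" "q \<phi> \<ge> 0" unfolding q_def by (auto simp: power_mult_distrib)
    have "r^2 - 2*r*R*cos \<phi> + R^2 - s^2 \<le> 0 \<longleftrightarrow> (r - R*cos \<phi>)^2 \<le> (q \<phi>)^2"
      unfolding key qq by simp
    also have "\<dots> \<longleftrightarrow> \<bar>r - R*cos \<phi>\<bar> \<le> q \<phi>" using qq(2) by (simp add: abs_le_square_iff[symmetric])
    finally show ?thesis unfolding P_def using True ph by auto
  next
    case False
    show ?thesis
    proof (cases "0 \<le> \<phi> \<and> \<phi> \<le> pi/2")
      case True
      hence "pm < \<phi>" using False by auto
      hence "s/R < sin \<phi>" using True pm sin_mono_le_eq[of \<phi> pm] by auto
      hence "s < R * sin \<phi>" using R by (simp add: field_simps)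
      hence "s^2 < (R * sin \<phi>)^2" using s0 by (intro power_strict_mono) auto
      hence "r^2 - 2*r*R*cos \<phi> + R^2 - s^2 > 0" unfolding key by (smt (verit) power_mult_distrib zero_le_power2)
      thus ?thesis unfolding P_def using False by auto
    qed (use False in \<open>auto simp: P_def\<close>)
  qed
  have Gcont: "continuous_on {0..pi/2} G" unfolding G_def by (rule indefinite_integral_continuous_1[OF Sint])
  have thcont: "continuous_on {R-s..R+s} th"
  proof -
    have e: "th = (\<lambda>r. arccos (c r))" by (rule ext) (simp add: th_def)
    have ce: "c = (\<lambda>r. (r\<^sup>2 + R\<^sup>2 - s\<^sup>2) / (2*r*R))" by (rule ext) (simp add: c_def)
    have cc: "continuous_on {R-s..R+s} c" unfolding ce
      by (intro continuous_intros) (use R sR in auto)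
    show ?thesis unfolding e
    proof (rule continuous_on_arccos[OF cc], rule ballI)
      fix r assume "r \<in> {R-s..R+s}"
      from crange[OF this] show "- 1 \<le> c r \<and> c r \<le> 1" by linarith
    qed
  qed
  have Fcont: "continuous_on {R-s..R+s} Fr"
    unfolding Fr_def
    by (intro continuous_intros continuous_on_compose2[OF Gcont thcont]) (use th_range in auto)
  have Gnn: "0 \<le> G x" if "0 \<le> x" "x \<le> pi" for x
    unfolding G_def by (rule integral_nonneg[OF Sint]) (use that in \<open>auto intro!: zero_le_power sin_ge_zero\<close>)
  have Fnn: "0 \<le> Fr r" if r: "r \<in> {R-s..R+s}" for r
    unfolding Fr_def using r sR th_range[OF r] by (intro mult_nonneg_nonneg Gnn) auto
  have L1: "(\<integral>\<^sup>+r. ennreal (indicator {R-s..R+s} r * Fr r) \<partial>lborel) = ennreal (integral {R-s..R+s} Fr)"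
    by (rule nn_integral_has_integral_lebesgue[OF Fnn integrable_integral[OF integrable_continuous_real[OF Fcont]]])
  have L2: "(\<integral>\<^sup>+\<phi>. f r \<phi> \<partial>lborel) = ennreal (indicator {R-s..R+s} r * Fr r)" for r
  proof (cases "r \<in> {R-s..R+s}")
    case True
    have "(\<integral>\<^sup>+\<phi>. f r \<phi> \<partial>lborel) = (\<integral>\<^sup>+\<phi>. ennreal (indicator {0..th r} \<phi> * (r * sin \<phi> ^ m)) \<partial>lborel)"
      by (intro nn_integral_cong) (simp add: f_def Pr[OF True] indicator_def)
    also have "\<dots> = ennreal (r * G (th r))"
    proof (rule nn_integral_has_integral_lebesgue)
      show "0 \<le> r * sin \<phi> ^ m" if "\<phi> \<in> {0..th r}" for \<phi>
        using that True sR th_range[OF True] by (auto intro!: mult_nonneg_nonneg zero_le_power sin_ge_zero)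
      show "((\<lambda>\<phi>. r * sin \<phi> ^ m) has_integral r * G (th r)) {0..th r}"
        unfolding G_def by (intro has_integral_mult_right integrable_integral Sint)
    qed
    finally show ?thesis using True by (simp add: Fr_def)
  next
    case False
    have "(\<integral>\<^sup>+\<phi>. f r \<phi> \<partial>lborel) = (\<integral>\<^sup>+(\<phi>::real). 0 \<partial>lborel)"
      by (intro nn_integral_cong) (simp add: f_def Pnr[OF False])
    thus ?thesis using False by simp
  qed
  have meas: "case_prod f \<in> borel_measurable (lborel \<Otimes>\<^sub>M lborel)"
  proof -
    have fe: "f = (\<lambda>r \<phi>. ennreal (if 0 \<le> \<phi> \<and> \<phi> \<le> pi/2 \<and> r^2 - 2*r*R*cos \<phi> + R^2 - s^2 \<le> 0 then r * sin \<phi> ^ m else 0))"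
      by (intro ext) (simp add: f_def P_def)
    show ?thesis unfolding fe by measurable
  qed
  have L3: "(\<integral>\<^sup>+r. f r \<phi> \<partial>lborel) = ennreal (indicator {0..pm} \<phi> * H \<phi>)" for \<phi>
  proof (cases "\<phi> \<in> {0..pm}")
    case True
    hence ph: "0 \<le> \<phi>" "\<phi> \<le> pi/2" using pm by auto
    have cs: "0 \<le> cos \<phi>" using ph by (intro cos_ge_zero) auto
    have "sin \<phi> \<le> s/R" using True pm sin_mono_le_eq[of \<phi> pm] by auto
    moreover have "0 \<le> sin \<phi>" using ph by (intro sin_ge_zero) auto
    ultimately have "R * sin \<phi> \<le> s" using R by (simp add: field_simps)
    hence "(R * sin \<phi>)^2 \<le> s^2" using \<open>0 \<le> sin \<phi>\<close> R by (intro power_mono) auto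
    hence qq: "(q \<phi>)^2 = s^2 - R^2 * (sin \<phi>)^2" "q \<phi> \<ge> 0" unfolding q_def by (auto simp: power_mult_distrib)
    define a where "a = R*cos \<phi> - q \<phi>"
    define b where "b = R*cos \<phi> + q \<phi>"
    have rc: "(R * cos \<phi>)^2 = R^2 - R^2 * (sin \<phi>)^2"
    proof -
      have "(cos \<phi>)^2 = 1 - (sin \<phi>)^2" by (rule cos_squared_eq)
      hence "R^2 * (cos \<phi>)^2 = R^2 * (1 - (sin \<phi>)^2)" by (rule arg_cong)
      thus ?thesis by (simp only: power_mult_distrib right_diff_distrib mult_1_right)
    qed
    have sR2: "s^2 \<le> R^2" using s0 sR by (intro power_mono) auto
    have qle: "(q \<phi>)^2 \<le> (R * cos \<phi>)^2" using qq(1) rc sR2 by linarith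
    have Rc0: "0 \<le> R * cos \<phi>" using cs R by simp
    have "q \<phi> \<le> R * cos \<phi>" by (rule power2_le_imp_le[OF qle Rc0])
    hence a0: "0 \<le> a" unfolding a_def by linarith
    have ab: "a \<le> b" unfolding a_def b_def using qq(2) by linarith
    have "(\<integral>\<^sup>+r. f r \<phi> \<partial>lborel) = (\<integral>\<^sup>+r. ennreal (indicator {a..b} r * (r * sin \<phi> ^ m)) \<partial>lborel)"
      using True by (intro nn_integral_cong) (auto simp: f_def Pphi a_def b_def indicator_def)
    also have "\<dots> = ennreal (H \<phi>)"
    proof (rule nn_integral_has_integral_lebesgue)
      show "0 \<le> r * sin \<phi> ^ m" if "r \<in> {a..b}" for r
        using that a0 \<open>0 \<le> sin \<phi>\<close> by (auto intro!: mult_nonneg_nonneg zero_le_power)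
      have "((\<lambda>r. r * sin \<phi> ^ m) has_integral (b^2/2 * sin \<phi> ^ m - a^2/2 * sin \<phi> ^ m)) {a..b}"
        by (rule fundamental_theorem_of_calculus[OF ab])
           (auto intro!: derivative_eq_intros simp: has_real_derivative_iff_has_vector_derivative[symmetric])
      moreover have "b^2/2 * sin \<phi> ^ m - a^2/2 * sin \<phi> ^ m = H \<phi>"
      proof -
        have d: "b^2 - a^2 = 4 * (R*cos \<phi>) * q \<phi>" unfolding a_def b_def by (simp add: power2_eq_square algebra_simps)
        have "b^2/2 * sin \<phi> ^ m - a^2/2 * sin \<phi> ^ m = (b^2 - a^2)/2 * sin \<phi> ^ m" by (simp add: algebra_simps diff_divide_distrib)
        also have "\<dots> = H \<phi>" unfolding d H_def by simp
        finally show ?thesis .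
      qed
      ultimately show "((\<lambda>r. r * sin \<phi> ^ m) has_integral H \<phi>) {a..b}" by simp
    qed
    finally show ?thesis using True by simp
  next
    case False
    have "(\<integral>\<^sup>+r. f r \<phi> \<partial>lborel) = (\<integral>\<^sup>+(r::real). 0 \<partial>lborel)"
      using False by (intro nn_integral_cong) (auto simp: f_def Pphi)
    thus ?thesis using False by simp
  qed
  have Hnn: "0 \<le> H \<phi>" if "\<phi> \<in> {0..pm}" for \<phi>
  proof -
    have ph: "0 \<le> \<phi>" "\<phi> \<le> pi/2" using that pm by auto
    have "sin \<phi> \<le> s/R" using that pm sin_mono_le_eq[of \<phi> pm] by auto
    moreover have s0': "0 \<le> sin \<phi>" using ph by (intro sin_ge_zero) auto
    ultimately have "R * sin \<phi> \<le> s" using R by (simp add: field_simps)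
    hence "(R * sin \<phi>)^2 \<le> s^2" using s0' R by (intro power_mono) auto
    hence "0 \<le> q \<phi>" unfolding q_def by (simp add: power_mult_distrib)
    moreover have "0 \<le> cos \<phi>" using ph by (intro cos_ge_zero) auto
    ultimately show ?thesis unfolding H_def using R s0'
      by (intro mult_nonneg_nonneg zero_le_power) auto
  qed
  have He: "H = (\<lambda>\<phi>. sin \<phi> ^ m * (2*R*cos \<phi> * sqrt (s\<^sup>2 - R\<^sup>2 * (sin \<phi>)\<^sup>2)))"
    by (rule ext) (simp only: H_def q_def)
  have Hcont: "continuous_on {0..pm} H" unfolding He by (intro continuous_intros)
  have L4: "(\<integral>\<^sup>+\<phi>. ennreal (indicator {0..pm} \<phi> * H \<phi>) \<partial>lborel) = ennreal (integral {0..pm} H)"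
    by (rule nn_integral_has_integral_lebesgue[OF Hnn integrable_integral[OF integrable_continuous_real[OF Hcont]]])
  have "ennreal (integral {R-s..R+s} Fr) = (\<integral>\<^sup>+r. ennreal (indicator {R-s..R+s} r * Fr r) \<partial>lborel)"
    using L1 by simp
  also have "\<dots> = (\<integral>\<^sup>+r. (\<integral>\<^sup>+\<phi>. f r \<phi> \<partial>lborel) \<partial>lborel)"
    by (simp only: L2)
  also have "\<dots> = (\<integral>\<^sup>+\<phi>. (\<integral>\<^sup>+r. f r \<phi> \<partial>lborel) \<partial>lborel)"
    by (rule lborel_pair.Fubini'[OF meas, symmetric])
  also have "\<dots> = (\<integral>\<^sup>+\<phi>. ennreal (indicator {0..pm} \<phi> * H \<phi>) \<partial>lborel)"
    by (simp only: L3)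
  also have "\<dots> = ennreal (integral {0..pm} H)" by (rule L4)
  finally have "ennreal (integral {R-s..R+s} Fr) = ennreal (integral {0..pm} H)" .
  moreover have "0 \<le> integral {R-s..R+s} Fr" by (intro integral_nonneg Fnn integrable_continuous_real Fcont)
  moreover have "0 \<le> integral {0..pm} H" by (intro integral_nonneg Hnn integrable_continuous_real Hcont)
  ultimately have "integral {R-s..R+s} Fr = integral {0..pm} H" by simp
  moreover have "Fr = (\<lambda>r. r * integral {0..arccos ((r\<^sup>2 + R\<^sup>2 - s\<^sup>2) / (2*r*R))} (\<lambda>\<phi>. sin \<phi> ^ m))"
    by (rule ext) (simp only: Fr_def G_def th_def c_def)
  moreover note He
  ultimately show ?thesis unfolding pm_def by simp
qed


lemma sub1:
  fixes R s :: real and m :: nat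
  assumes R: "R > 0" and s0: "0 < s" and sR: "s < R"
  shows "integral {0..arcsin (s/R)} (\<lambda>\<phi>. sin \<phi> ^ m * (2*R*cos \<phi> * sqrt (s\<^sup>2 - R\<^sup>2 * (sin \<phi>)\<^sup>2)))
       = 2 * s^(m+2) / R^m * integral {0..pi/2} (\<lambda>\<psi>. sin \<psi> ^ m * (cos \<psi>)\<^sup>2)"
proof -
  define k where "k = s/R"
  have k: "0 < k" "k < 1" using R s0 sR by (auto simp: k_def)
  define f where "f \<phi> = sin \<phi> ^ m * (2*R*cos \<phi> * sqrt (s\<^sup>2 - R\<^sup>2 * (sin \<phi>)\<^sup>2))" for \<phi>
  define g where "g \<psi> = arcsin (k * sin \<psi>)" for \<psi>
  define g' where "g' \<psi> = inverse (sqrt (1 - (k * sin \<psi>)\<^sup>2)) * (k * cos \<psi>)" for \<psi>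
  have fe: "f = (\<lambda>\<phi>. sin \<phi> ^ m * (2*R*cos \<phi> * sqrt (s\<^sup>2 - R\<^sup>2 * (sin \<phi>)\<^sup>2)))" by (rule ext) (simp add: f_def)
  have ksin: "0 \<le> k * sin \<psi> \<and> k * sin \<psi> \<le> k" if "\<psi> \<in> {0..pi/2}" for \<psi>
  proof -
    have "0 \<le> sin \<psi>" "sin \<psi> \<le> 1" using that by (auto intro!: sin_ge_zero)
    thus ?thesis using k by (auto simp: mult_left_le)
  qed
  have deriv: "(g has_field_derivative g' \<psi>) (at \<psi> within {0..pi/2})" if "\<psi> \<in> {0..pi/2}" for \<psi>
  proof -
    have "0 \<le> k * sin \<psi>" "k * sin \<psi> \<le> k" using ksin[OF that] by blast+
    hence "-1 < k * sin \<psi>" "k * sin \<psi> < 1" using k by linarith+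
    thus ?thesis unfolding g_def g'_def
      by (auto intro!: derivative_eq_intros)
  qed
  have sub: "((\<lambda>\<psi>. g' \<psi> *\<^sub>R f (g \<psi>)) has_integral (integral {g 0..g (pi/2)} f)) {0..pi/2}"
  proof (rule has_integral_substitution[where c=0 and d="arcsin k"])
    show "g 0 \<le> g (pi/2)" unfolding g_def using k by (intro arcsin_le_arcsin) auto
    show "g ` {0..pi/2} \<subseteq> {0..arcsin k}"
    proof
      fix y assume "y \<in> g ` {0..pi/2}"
      then obtain \<psi> where p: "\<psi> \<in> {0..pi/2}" "y = g \<psi>" by auto
      have kk: "0 \<le> k * sin \<psi>" "k * sin \<psi> \<le> k" using ksin[OF p(1)] by blast+
      have k1: "k * sin \<psi> \<le> 1" using kk k by linarith
      have "arcsin 0 \<le> arcsin (k * sin \<psi>)" using kk k1 by (intro arcsin_le_arcsin) auto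
      moreover have "arcsin (k * sin \<psi>) \<le> arcsin k" using kk k k1 by (intro arcsin_le_arcsin) auto
      ultimately have "0 \<le> arcsin (k * sin \<psi>)" "arcsin (k * sin \<psi>) \<le> arcsin k" by simp_all
      thus "y \<in> {0..arcsin k}" using p by (simp add: g_def)
    qed
    show "continuous_on {0..arcsin k} f" unfolding fe by (intro continuous_intros)
  qed (use deriv in auto)
  have g0: "g 0 = 0" "g (pi/2) = arcsin k" by (simp_all add: g_def)
  have pt: "g' \<psi> *\<^sub>R f (g \<psi>) = 2 * s^(m+2) / R^m * (sin \<psi> ^ m * (cos \<psi>)\<^sup>2)" if "\<psi> \<in> {0..pi/2}" for \<psi>
  proof -
    define y where "y = k * sin \<psi>"
    have kk: "0 \<le> k * sin \<psi>" "k * sin \<psi> \<le> k" using ksin[OF that] by blast+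
    have y: "0 \<le> y" "y < 1" using kk k unfolding y_def by linarith+
    have c0: "0 \<le> cos \<psi>" using that by (intro cos_ge_zero) auto
    have sy: "sin (g \<psi>) = y" "cos (g \<psi>) = sqrt (1 - y\<^sup>2)" using y
      by (simp_all add: g_def y_def[symmetric] cos_arcsin)
    have sq: "0 < sqrt (1 - y\<^sup>2)"
      using y by (simp add: power_less_one_iff abs_square_less_1)
    have Rk: "R * k = s" using R by (simp add: k_def)
    have "s\<^sup>2 - R\<^sup>2 * y\<^sup>2 = (s * cos \<psi>)\<^sup>2"
    proof -
      have "R\<^sup>2 * y\<^sup>2 = s\<^sup>2 * (sin \<psi>)\<^sup>2" unfolding y_def Rk[symmetric] by (simp add: power_mult_distrib)
      thus ?thesis by (simp add: power_mult_distrib cos_squared_eq right_diff_distrib)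
    qed
    hence sq2: "sqrt (s\<^sup>2 - R\<^sup>2 * y\<^sup>2) = s * cos \<psi>" using s0 c0 by simp
    have "g' \<psi> *\<^sub>R f (g \<psi>) = inverse (sqrt (1 - y\<^sup>2)) * (k * cos \<psi>) * (y ^ m * (2*R* sqrt (1 - y\<^sup>2) * (s * cos \<psi>)))"
      unfolding f_def sy sq2 g'_def y_def[symmetric] by simp
    also have "\<dots> = 2 * (R * k) * s * k ^ m * sin \<psi> ^ m * (cos \<psi>)\<^sup>2"
      using sq by (simp add: y_def power_mult_distrib field_simps power2_eq_square)
    also have "\<dots> = 2 * s^(m+2) / R^m * (sin \<psi> ^ m * (cos \<psi>)\<^sup>2)"
      unfolding Rk using R by (simp add: k_def power_divide field_simps power_add power2_eq_square)
    finally show ?thesis .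
  qed
  have "((\<lambda>\<psi>. 2 * s^(m+2) / R^m * (sin \<psi> ^ m * (cos \<psi>)\<^sup>2)) has_integral (integral {0..arcsin k} f)) {0..pi/2}"
    using sub unfolding g0 by (rule has_integral_eq[rotated]) (use pt in auto)
  hence "integral {0..arcsin k} f = integral {0..pi/2} (\<lambda>\<psi>. 2 * s^(m+2) / R^m * (sin \<psi> ^ m * (cos \<psi>)\<^sup>2))"
    by (rule integral_unique[symmetric])
  also have "\<dots> = 2 * s^(m+2) / R^m * integral {0..pi/2} (\<lambda>\<psi>. sin \<psi> ^ m * (cos \<psi>)\<^sup>2)"
    by (rule integral_mult_right)
  finally show ?thesis unfolding fe k_def .
qed

lemma reflect_K:
  fixes m :: nat
  shows "integral {0..pi/2} (\<lambda>\<psi>. (sin \<psi>)\<^sup>2 * cos \<psi> ^ m) = integral {0..pi/2} (\<lambda>\<psi>. sin \<psi> ^ m * (cos \<psi>)\<^sup>2)"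
proof -
  define f where "f \<psi> = sin \<psi> ^ m * (cos \<psi>)\<^sup>2" for \<psi> :: real
  have fe: "f = (\<lambda>\<psi>. sin \<psi> ^ m * (cos \<psi>)\<^sup>2)" by (rule ext) (simp add: f_def)
  have sc: "sin (pi/2 - x) = cos x" for x :: real by (simp add: sin_diff)
  have cs: "cos (pi/2 - x) = sin x" for x :: real by (simp add: cos_diff)
  have fc: "continuous_on {0..pi/2} f" unfolding fe by (intro continuous_intros)
  have gc: "continuous_on {0..pi/2} (\<lambda>x::real. pi/2 - x)" by (intro continuous_intros)
  have gd: "((\<lambda>x::real. pi/2 - x) has_field_derivative (-1)) (at x within {0..pi/2})" for x
    by (rule derivative_eq_intros refl)+ simp
  have im: "(\<lambda>x::real. pi/2 - x) ` {0..pi/2} \<subseteq> {0..pi/2}" by auto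
  have "((\<lambda>x. (-1) *\<^sub>R f (pi/2 - x)) has_integral (integral {pi/2 - 0..pi/2 - pi/2} f - integral {pi/2 - pi/2..pi/2 - 0} f)) {0..pi/2}"
    by (rule has_integral_substitution_general[where s="{}", OF _ _ im fc gc gd]) auto
  moreover have "integral {pi/2 - 0..pi/2 - pi/2} f = 0" by simp
  moreover have "(\<lambda>x. (-1) *\<^sub>R f (pi/2 - x)) = (\<lambda>x. - ((sin x)\<^sup>2 * cos x ^ m))"
    by (rule ext) (simp add: f_def sc cs mult.commute)
  ultimately have "((\<lambda>x. - ((sin x)\<^sup>2 * cos x ^ m)) has_integral (- integral {0..pi/2} f)) {0..pi/2}"
    by simp
  from has_integral_neg[OF this]
  have "((\<lambda>x. ((sin x)\<^sup>2 * cos x ^ m)) has_integral (integral {0..pi/2} f)) {0..pi/2}"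
    by simp
  thus ?thesis unfolding fe by (rule integral_unique)
qed



lemma sub2:
  fixes s t L :: real and N j :: nat
  assumes s0: "0 < s" and L: "L = s\<^sup>2 + t\<^sup>2" and N: "N = j + 3"
  shows "integral {0..s} (\<lambda>\<sigma>. \<sigma>\<^sup>2 * (1 - (\<sigma>\<^sup>2 + t\<^sup>2) / L) powr ((real N - 3) / 2))
       = s^(j+3) / sqrt L ^ j * integral {0..pi/2} (\<lambda>\<psi>. (sin \<psi>)\<^sup>2 * cos \<psi> ^ (j+1))"
proof -
  have Lpos: "L > 0" using L s0 by (simp add: add_pos_nonneg)
  define f where "f \<sigma> = \<sigma>\<^sup>2 * sqrt ((s\<^sup>2 - \<sigma>\<^sup>2) / L) ^ j" for \<sigma> :: real
  have fe: "f = (\<lambda>\<sigma>. \<sigma>\<^sup>2 * sqrt ((s\<^sup>2 - \<sigma>\<^sup>2) / L) ^ j)" by (rule ext) (simp add: f_def)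
  have e: "(real N - 3) / 2 = real j * (1/2)" using N by simp
  have spike: "integral {0..s} (\<lambda>\<sigma>. \<sigma>\<^sup>2 * (1 - (\<sigma>\<^sup>2 + t\<^sup>2) / L) powr ((real N - 3) / 2)) = integral {0..s} f"
  proof (rule integral_spike[of "{s}", symmetric])
    show "negligible {s}" by auto
    fix \<sigma> assume "\<sigma> \<in> {0..s} - {s}"
    hence sg: "0 \<le> \<sigma>" "\<sigma> < s" by auto
    have "\<sigma>\<^sup>2 < s\<^sup>2" using sg by (intro power_strict_mono) auto
    hence xpos: "(s\<^sup>2 - \<sigma>\<^sup>2) / L > 0" using Lpos by simp
    have x: "1 - (\<sigma>\<^sup>2 + t\<^sup>2) / L = (s\<^sup>2 - \<sigma>\<^sup>2) / L"
    proof -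
      have "1 - (\<sigma>\<^sup>2 + t\<^sup>2) / L = (L - (\<sigma>\<^sup>2 + t\<^sup>2)) / L" using Lpos by (simp add: diff_divide_distrib)
      also have "L - (\<sigma>\<^sup>2 + t\<^sup>2) = s\<^sup>2 - \<sigma>\<^sup>2" using L by simp
      finally show ?thesis .
    qed
    have "((s\<^sup>2 - \<sigma>\<^sup>2) / L) powr (real j * (1/2)) = (((s\<^sup>2 - \<sigma>\<^sup>2) / L) powr (1/2)) ^ j"
      using powr_power[of "(s\<^sup>2 - \<sigma>\<^sup>2) / L" "1/2" j] xpos by (metis less_irrefl mult.commute)
    also have "\<dots> = sqrt ((s\<^sup>2 - \<sigma>\<^sup>2) / L) ^ j" using xpos by (simp add: powr_half_sqrt)
    finally show "\<sigma>\<^sup>2 * (1 - (\<sigma>\<^sup>2 + t\<^sup>2) / L) powr ((real N - 3) / 2) = f \<sigma>"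
      unfolding f_def x e by simp
  qed
  have sub: "((\<lambda>\<psi>. (s * cos \<psi>) *\<^sub>R f (s * sin \<psi>)) has_integral (integral {s * sin 0..s * sin (pi/2)} f)) {0..pi/2}"
  proof (rule has_integral_substitution[where c=0 and d=s])
    show "s * sin 0 \<le> s * sin (pi/2)" using s0 by simp
    show "(\<lambda>\<psi>. s * sin \<psi>) ` {0..pi/2} \<subseteq> {0..s}"
    proof
      fix y assume "y \<in> (\<lambda>\<psi>. s * sin \<psi>) ` {0..pi/2}"
      then obtain \<psi> where p: "\<psi> \<in> {0..pi/2}" "y = s * sin \<psi>" by auto
      have "0 \<le> sin \<psi>" "sin \<psi> \<le> 1" using p by (auto intro!: sin_ge_zero)
      thus "y \<in> {0..s}" using p s0 by (auto simp: mult_left_le)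
    qed
    show "continuous_on {0..s} f" unfolding fe using Lpos by (intro continuous_intros) auto
    fix x show "((\<lambda>\<psi>. s * sin \<psi>) has_field_derivative s * cos x) (at x within {0..pi/2})"
      by (auto intro!: derivative_eq_intros)
  qed simp
  have pt: "(s * cos \<psi>) *\<^sub>R f (s * sin \<psi>) = s^(j+3) / sqrt L ^ j * ((sin \<psi>)\<^sup>2 * cos \<psi> ^ (j+1))"
    if "\<psi> \<in> {0..pi/2}" for \<psi>
  proof -
    have c0: "0 \<le> cos \<psi>" using that by (intro cos_ge_zero) auto
    have "s\<^sup>2 - (s * sin \<psi>)\<^sup>2 = (s * cos \<psi>)\<^sup>2"
      by (simp add: power_mult_distrib cos_squared_eq right_diff_distrib)
    hence "sqrt ((s\<^sup>2 - (s * sin \<psi>)\<^sup>2) / L) = s * cos \<psi> / sqrt L"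
      using s0 c0 by (simp add: real_sqrt_divide)
    hence "(s * cos \<psi>) *\<^sub>R f (s * sin \<psi>) = (s * cos \<psi>) * ((s * sin \<psi>)\<^sup>2 * (s * cos \<psi> / sqrt L) ^ j)"
      unfolding f_def by simp
    also have "\<dots> = s^(j+3) / sqrt L ^ j * ((sin \<psi>)\<^sup>2 * cos \<psi> ^ (j+1))"
      by (simp add: power_divide power_mult_distrib power_add power2_eq_square power3_eq_cube field_simps)
    finally show ?thesis .
  qed
  have "((\<lambda>\<psi>. s^(j+3) / sqrt L ^ j * ((sin \<psi>)\<^sup>2 * cos \<psi> ^ (j+1))) has_integral (integral {0..s} f)) {0..pi/2}"
    using sub by (simp) (rule has_integral_eq[rotated], assumption, use pt in auto)
  hence "integral {0..s} f = integral {0..pi/2} (\<lambda>\<psi>. s^(j+3) / sqrt L ^ j * ((sin \<psi>)\<^sup>2 * cos \<psi> ^ (j+1)))"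
    by (rule integral_unique[symmetric])
  also have "\<dots> = s^(j+3) / sqrt L ^ j * integral {0..pi/2} (\<lambda>\<psi>. (sin \<psi>)\<^sup>2 * cos \<psi> ^ (j+1))"
    by (rule integral_mult_right)
  finally show ?thesis using spike by simp
qed


theorem proposition4p3:
  fixes \<tau> \<beta> :: real
  assumes "\<tau> > 0" and "0 < \<beta>" and "\<beta> < 1"
  shows "\<exists>C. \<forall>N::nat. N \<ge> 3 \<longrightarrow> (\<forall>x :: real ^ 'n. norm x \<le> \<beta> * radR N \<tau> \<longrightarrow>
           (\<exists>\<epsilon>. \<bar>\<epsilon>\<bar> \<le> C / real N \<and>
              mu N \<tau> \<beta> x =
                (1 + \<epsilon>) * (\<beta> ^ (N - 3) / sqrt (pi * \<tau>)) *
                integral {0..sfun N \<tau> \<beta> (norm x)}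
                  (\<lambda>\<sigma>. \<sigma>\<^sup>2 * (1 - (\<sigma>\<^sup>2 + (norm x)\<^sup>2) / (2 * real N * \<beta>\<^sup>2 * \<tau>))
                          powr ((real N - 3) / 2))))"
proof (rule exI[of _ 2], intro allI impI)
  fix N :: nat and x :: "real ^ 'n"
  assume N3: "N \<ge> 3" and xb: "norm x \<le> \<beta> * radR N \<tau>"
  have tau: "\<tau> > 0" and b0: "0 < \<beta>" and b1: "\<beta> < 1" using assms by auto
  define j where "j = N - 3"
  have Nj: "N = j + 3" using N3 by (simp add: j_def)
  define R where "R = radR N \<tau>"
  define t where "t = norm x"
  define s where "s = sfun N \<tau> \<beta> t"
  define W where "W = WW (j+1)"
  define P where "P = sqrt (pi * \<tau>)"
  define K where "K = integral {0..pi/2} (\<lambda>\<psi>. sin \<psi> ^ (j+1) * (cos \<psi>)\<^sup>2)"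
  define I where "I = integral {0..s} (\<lambda>\<sigma>. \<sigma>\<^sup>2 * (1 - (\<sigma>\<^sup>2 + t\<^sup>2) / (2 * real N * \<beta>\<^sup>2 * \<tau>)) powr ((real N - 3) / 2))"
  define \<rho> where "\<rho> = 2 * P / (W * R)"
  have RR: "R\<^sup>2 = 2 * real N * \<tau>" unfolding R_def radR_def using tau by simp
  have Rpos: "R > 0" unfolding R_def radR_def using tau N3 by simp
  have Wpos: "W > 0" unfolding W_def by (rule WW_pos)
  have Ppos: "P > 0" unfolding P_def using tau by simp
  have t0: "0 \<le> t" "t \<le> \<beta> * R" using xb by (auto simp: t_def R_def)
  have tb: "t\<^sup>2 \<le> (\<beta> * R)\<^sup>2" using t0 by (intro power_mono) auto
  have ss: "s\<^sup>2 = \<beta>\<^sup>2 * R\<^sup>2 - t\<^sup>2" "0 \<le> s"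
    unfolding s_def sfun_def R_def[symmetric] using tb by (auto simp: power_mult_distrib)
  have sR: "s < R"
  proof -
    have "s\<^sup>2 \<le> \<beta>\<^sup>2 * R\<^sup>2" using ss by simp
    also have "\<dots> < R\<^sup>2" using b0 b1 Rpos by (simp add: power_less_one_iff abs_less_iff)
    finally show ?thesis using Rpos by (simp add: power_less_imp_less_base[of s 2 R] less_imp_le)
  qed
  have bnd: "\<bar>\<rho> - 1\<bar> \<le> 2 / real N"
  proof -
    have \<rho>pos: "\<rho> > 0" unfolding \<rho>_def using Ppos Wpos Rpos by simp
    have \<rho>sq: "\<rho>\<^sup>2 = 2 * pi / (real N * W\<^sup>2)"
      unfolding \<rho>_def P_def using tau Wpos Rpos RR N3
      by (simp add: power_divide power_mult_distrib field_simps)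
    have wb1: "2 * pi / real (j+2) \<le> W\<^sup>2" "W\<^sup>2 \<le> 2 * pi / real (j+1)"
      using WW_sq_bounds[of "j+1"] unfolding W_def by simp_all
    have Npos: "real N > 0" using N3 by simp
    have "\<rho>\<^sup>2 \<le> real (j+2) / real N"
    proof -
      have "2 * pi / (real N * W\<^sup>2) \<le> 2 * pi / (real N * (2 * pi / real (j+2)))"
        using wb1(1) Npos Wpos by (intro divide_left_mono mult_left_mono mult_pos_pos) auto
      also have "\<dots> = real (j+2) / real N" using Npos pi_gt_zero by (simp add: field_simps)
      finally show ?thesis using \<rho>sq by simp
    qed
    also have "\<dots> \<le> 1" using Nj by simp
    finally have r1: "\<rho> \<le> 1" using \<rho>pos by (simp add: power_le_one_iff)
    have "real (j+1) / real N \<le> \<rho>\<^sup>2"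
    proof -
      have "real (j+1) / real N = 2 * pi / (real N * (2 * pi / real (j+1)))" using Npos pi_gt_zero by (simp add: field_simps)
      also have "\<dots> \<le> 2 * pi / (real N * W\<^sup>2)"
        using wb1(2) Npos Wpos by (intro divide_left_mono mult_left_mono mult_pos_pos) auto
      finally show ?thesis using \<rho>sq by simp
    qed
    moreover have "\<rho>\<^sup>2 \<le> \<rho>" using r1 \<rho>pos by (simp add: power2_eq_square mult_left_le)
    moreover have "real (j+1) / real N = 1 - 2 / real N" using Nj Npos by (simp add: field_simps)
    ultimately have "1 - 2 / real N \<le> \<rho>" by linarith
    thus ?thesis using r1 by simp
  qed
  have ident: "mu N \<tau> \<beta> x = \<rho> * (\<beta> ^ (N - 3) / P) * I"
  proof (cases "s = 0")
    case True
    have "mu N \<tau> \<beta> x = 0" unfolding mu_def Let_def R_def[symmetric] t_def[symmetric] s_def[symmetric] True by simp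
    moreover have "I = 0" unfolding I_def True by simp
    ultimately show ?thesis by simp
  next
    case False
    hence s0: "s > 0" using ss by simp
    have capf: "cap_fraction N \<theta> = integral {0..\<theta>} (\<lambda>\<phi>. sin \<phi> ^ (j+1)) / W" for \<theta>
      unfolding cap_fraction_def W_def WW_def using Nj by simp
    have "mu N \<tau> \<beta> x = integral {R-s..R+s} (\<lambda>r. (1/W) * (r * integral {0..arccos ((r\<^sup>2 + R\<^sup>2 - s\<^sup>2) / (2*r*R))} (\<lambda>\<phi>. sin \<phi> ^ (j+1))))"
      unfolding mu_def Let_def R_def[symmetric] t_def[symmetric] s_def[symmetric] hfun_def cap_angle_def capf
      by simp
    also have "\<dots> = (1/W) * integral {R-s..R+s} (\<lambda>r. r * integral {0..arccos ((r\<^sup>2 + R\<^sup>2 - s\<^sup>2) / (2*r*R))} (\<lambda>\<phi>. sin \<phi> ^ (j+1)))"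
      by (rule integral_mult_right)
    also have "\<dots> = (1/W) * (2 * s^(j+1+2) / R^(j+1) * K)"
      unfolding fubini_step[OF Rpos s0 sR] sub1[OF Rpos s0 sR] K_def ..
    finally have mu_eq: "mu N \<tau> \<beta> x = (1/W) * (2 * s^(j+3) / R^(j+1) * K)"
      by (simp add: numeral_3_eq_3)
    have L: "2 * real N * \<beta>\<^sup>2 * \<tau> = s\<^sup>2 + t\<^sup>2" using ss RR by (simp add: algebra_simps)
    have sqL: "sqrt (2 * real N * \<beta>\<^sup>2 * \<tau>) = \<beta> * R"
      unfolding R_def radR_def using b0 tau
      by (simp add: real_sqrt_mult algebra_simps)
    have I_eq: "I = s^(j+3) / (\<beta> * R) ^ j * K"
      unfolding I_def sub2[OF s0 L Nj] sqL reflect_K K_def by simp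
    show ?thesis unfolding mu_eq I_eq \<rho>_def using Wpos Rpos Ppos b0 Nj
      by (simp add: power_mult_distrib field_simps)
  qed
  show "\<exists>\<epsilon>. \<bar>\<epsilon>\<bar> \<le> 2 / real N \<and>
              mu N \<tau> \<beta> x =
                (1 + \<epsilon>) * (\<beta> ^ (N - 3) / sqrt (pi * \<tau>)) *
                integral {0..sfun N \<tau> \<beta> (norm x)}
                  (\<lambda>\<sigma>. \<sigma>\<^sup>2 * (1 - (\<sigma>\<^sup>2 + (norm x)\<^sup>2) / (2 * real N * \<beta>\<^sup>2 * \<tau>))
                          powr ((real N - 3) / 2))"
    by (rule exI[of _ "\<rho> - 1"]) (use bnd ident in \<open>simp add: I_def s_def t_def P_def\<close>)
qed

end
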